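(* Let $\mathcal{P}$ be a Class II source set, i.e. there is a permutation $T$ of $\{1,\ldots,M\}$ such that every $P\in\mathcal{P}$ satisfies $P_{T(1)} \ge P_{T(2)} \ge \dots \ge P_{T(M)}$. Then for every $0< D\le 1$ there exists an optimal mechanism, i.e. a mechanism $Q_{\hat X|X}$ attaining $\epsilon^*_{\mathrm{DP}}(\mathcal{P},D)=\min_{Q\in\mathcal{Q}(\mathcal{P},D)}\epsilon_{\mathrm{DP}}(Q)$, whose distortions $D_i=1-Q(i|i)$ satisfy $D_{T(1)} \le D_{T(2)} \le \dots \le D_{T(M)}$.
   Context: Data $X$ takes values in the finite alphabet $\mathcal{X}=\hat{\mathcal{X}}=\{1,\ldots,M\}$ and is drawn from an unknown distribution $P$ belonging to a known set $\mathcal{P}$ of distributions on $\{1,\ldots,M\}$ (a source set); $P_i$ denotes $P(X=i)$. A mechanism is a conditional distribution (row-stochastic $M\times M$ matrix) $Q_{\hat X|X}=Q(j|i)$ mapping input $X$ to output $\hat X$. Distortion is Hamming distortion $d(x,y)=\mathbb{1}[x\neq y]$, so the average distortion under $P$ is $\sum_{i=1}^M P_i D_i$ with $D_i = 1-Q(i|i)$. A mechanism is $(\mathcal{P},D)$-valid if $\sum_{i=1}^M P_i D_i\le D$ for all $P\in\mathcal{P}$; $\mathcal{Q}(\mathcal{P},D)$ is the set of such mechanisms. The differential privacy leakage is $\epsilon_{\mathrm{DP}}(Q)=\min\{\epsilon: Q(\hat x|x_1)\le e^{\epsilon}Q(\hat x|x_2)\ \forall x_1,x_2,\hat x\}$.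 A source set is Class I if its convex hull contains the uniform distribution; it is Class II if it is not Class I and there exists a single permutation $T$ with $P_{T(1)}\ge \dots\ge P_{T(M)}$ for every $P\in\mathcal{P}$. *)

theory Defs
  imports "HOL-Analysis.Analysis" "HOL-Library.Extended_Real" "HOL-Combinatorics.Permutations"
begin

text \<open>Alphabet is {1..M}. A distribution is a function nat => real (only values on {1..M} matter);
a mechanism is Q :: nat => nat => real with Q i j = Q(j|i).\<close>

definition is_dist :: "nat \<Rightarrow> (nat \<Rightarrow> real) \<Rightarrow> bool" where
  "is_dist M P \<longleftrightarrow> (\<forall>i\<in>{1..M}. 0 \<le> P i) \<and> (\<Sum>i=1..M. P i) = 1"

definition is_mechanism :: "nat \<Rightarrow> (nat \<Rightarrow> nat \<Rightarrow> real) \<Rightarrow> bool" where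
  "is_mechanism M Q \<longleftrightarrow> (\<forall>i\<in>{1..M}. \<forall>j\<in>{1..M}. 0 \<le> Q i j) \<and>
                         (\<forall>i\<in>{1..M}. (\<Sum>j=1..M. Q i j) = 1)"

definition distortion :: "(nat \<Rightarrow> nat \<Rightarrow> real) \<Rightarrow> nat \<Rightarrow> real" where
  "distortion Q i = 1 - Q i i"

definition valid_mechs :: "nat \<Rightarrow> (nat \<Rightarrow> real) set \<Rightarrow> real \<Rightarrow> (nat \<Rightarrow> nat \<Rightarrow> real) set" where
  "valid_mechs M \<P> D = {Q. is_mechanism M Q \<and>
      (\<forall>P\<in>\<P>. (\<Sum>i=1..M. P i * distortion Q i) \<le> D)}"

text \<open>DP leakage: least eps with Q(xh|x1) <= exp eps * Q(xh|x2); infinite if no such eps.\<close>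
definition eps_DP :: "nat \<Rightarrow> (nat \<Rightarrow> nat \<Rightarrow> real) \<Rightarrow> ereal" where
  "eps_DP M Q = Inf (ereal ` {e. \<forall>x1\<in>{1..M}. \<forall>x2\<in>{1..M}. \<forall>xh\<in>{1..M}.
                                  Q x1 xh \<le> exp e * Q x2 xh})"

text \<open>Class I: the convex hull of the source set contains the uniform distribution
  (convex hull written out as finite convex combinations).\<close>
definition class_I :: "nat \<Rightarrow> (nat \<Rightarrow> real) set \<Rightarrow> bool" where
  "class_I M \<P> \<longleftrightarrow> (\<exists>S w. finite S \<and> S \<subseteq> \<P> \<and> (\<forall>P\<in>S. 0 \<le> w P) \<and> (\<Sum>P\<in>S. w P) = 1 \<and>
      (\<forall>i\<in>{1..M}. (\<Sum>P\<in>S. w P * P i) = 1 / real M))"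

definition ordered_by :: "nat \<Rightarrow> (nat \<Rightarrow> nat) \<Rightarrow> (nat \<Rightarrow> real) \<Rightarrow> bool" where
  "ordered_by M T P \<longleftrightarrow> (\<forall>k\<in>{1..M}. \<forall>l\<in>{1..M}. k \<le> l \<longrightarrow> P (T l) \<le> P (T k))"

definition class_II :: "nat \<Rightarrow> (nat \<Rightarrow> real) set \<Rightarrow> bool" where
  "class_II M \<P> \<longleftrightarrow> \<not> class_I M \<P> \<and> (\<exists>T. T permutes {1..M} \<and> (\<forall>P\<in>\<P>. ordered_by M T P))"

end

theory Submission
  imports Defs
begin

definition Cset :: "nat \<Rightarrow> real \<Rightarrow> (nat \<Rightarrow> nat \<Rightarrow> real) set" where
  "Cset M c = {Q. \<forall>x1\<in>{1..M}. \<forall>x2\<in>{1..M}. \<forall>xh\<in>{1..M}. Q x1 xh \<le> exp c * Q x2 xh}"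

lemma eps_le_iff:
  assumes nonneg: "\<forall>i\<in>{1..M}. \<forall>j\<in>{1..M}. 0 \<le> Q i j"
  shows "eps_DP M Q \<le> ereal c \<longleftrightarrow> Q \<in> Cset M c"
proof
  assume "Q \<in> Cset M c"
  then show "eps_DP M Q \<le> ereal c"
    unfolding eps_DP_def Cset_def by (intro Inf_lower) auto
next
  define S where "S = {e. \<forall>x1\<in>{1..M}. \<forall>x2\<in>{1..M}. \<forall>xh\<in>{1..M}. Q x1 xh \<le> exp e * Q x2 xh}"
  assume a: "eps_DP M Q \<le> ereal c"
  hence inf: "Inf (ereal ` S) \<le> ereal c" by (simp add: eps_DP_def S_def)
  have ne: "S \<noteq> {}"
  proof
    assume "S = {}" then show False using inf by (simp add: top_ereal_def)
  qed
  show "Q \<in> Cset M c"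
    unfolding Cset_def
  proof (intro CollectI ballI)
    fix x1 x2 xh assume x: "x1 \<in> {1..M}" "x2 \<in> {1..M}" "xh \<in> {1..M}"
    show "Q x1 xh \<le> exp c * Q x2 xh"
    proof (cases "Q x2 xh = 0")
      case True
      from ne obtain e where "e \<in> S" by auto
      then have "Q x1 xh \<le> exp e * Q x2 xh" using x unfolding S_def by blast
      then show ?thesis using True by simp
    next
      case False
      hence pos: "Q x2 xh > 0" using nonneg x by force
      show ?thesis
      proof (rule dense_ge)
        fix y assume y: "exp c * Q x2 xh < y"
        define c' where "c' = ln (y / Q x2 xh)"
        have ypos: "y > 0" using y pos by (smt (verit) exp_gt_zero mult_pos_pos)
        have "exp c < y / Q x2 xh" using y pos by (simp add: field_simps)
        hence "c < c'" unfolding c'_def using ypos pos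
          by (metis divide_pos_pos exp_less_cancel_iff exp_ln)
        hence "Inf (ereal ` S) < ereal c'" using inf by (meson ereal_less_eq(3) le_less_trans not_le)
        then obtain e' where "e' \<in> ereal ` S" "e' < ereal c'" by (meson Inf_less_iff)
        then obtain e where e: "e \<in> S" "e < c'" by auto
        have "Q x1 xh \<le> exp e * Q x2 xh" using e x by (auto simp: S_def)
        also have "\<dots> \<le> exp c' * Q x2 xh" using e pos by simp
        also have "\<dots> = y" unfolding c'_def using ypos pos by simp
        finally show "Q x1 xh \<le> y" .
      qed
    qed
  qed
qed

lemma sum_swap2:
  fixes f g :: "'a \<Rightarrow> real"
  assumes "finite A" "a \<in> A" "b \<in> A" "a \<noteq> b" "\<forall>i\<in>A-{a,b}. g i = f i"
  shows "sum g A = sum f A + (g a - f a) + (g b - f b)"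
proof -
  have "sum g A = g a + g b + sum g (A - {a} - {b})"
    using assms by (simp add: sum.remove[of A a] sum.remove[of "A-{a}" b])
  moreover have "sum f A = f a + f b + sum f (A - {a} - {b})"
    using assms by (simp add: sum.remove[of A a] sum.remove[of "A-{a}" b])
  moreover have "sum g (A - {a} - {b}) = sum f (A - {a} - {b})"
    using assms(5) by (intro sum.cong) auto
  ultimately show ?thesis by simp
qed

definition relabel :: "(nat \<Rightarrow> nat \<Rightarrow> real) \<Rightarrow> (nat \<Rightarrow> nat) \<Rightarrow> (nat \<Rightarrow> nat \<Rightarrow> real)" where
  "relabel Q p = (\<lambda>i j. Q (p i) (p j))"

lemma relabel_mech:
  assumes "p permutes {1..M}" "is_mechanism M Q"
  shows "is_mechanism M (relabel Q p)"
proof -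
  have img: "p i \<in> {1..M} \<longleftrightarrow> i \<in> {1..M}" for i using permutes_in_image[OF assms(1)] .
  have "(\<Sum>j=1..M. Q (p i) (p j)) = (\<Sum>j=1..M. Q (p i) j)" for i
    using sum.permute[OF assms(1), of "\<lambda>j. Q (p i) j"] by (simp add: o_def)
  then show ?thesis using assms(2) img unfolding is_mechanism_def relabel_def by auto
qed

lemma relabel_eps:
  assumes "p permutes {1..M}"
  shows "eps_DP M (relabel Q p) = eps_DP M Q"
proof -
  have im: "p ` {1..M} = {1..M}" using permutes_image[OF assms] .
  have eq: "(\<forall>x1\<in>{1..M}. \<forall>x2\<in>{1..M}. \<forall>xh\<in>{1..M}. Q (p x1) (p xh) \<le> exp e * Q (p x2) (p xh))
    \<longleftrightarrow> (\<forall>x1\<in>p`{1..M}. \<forall>x2\<in>p`{1..M}. \<forall>xh\<in>p`{1..M}. Q x1 xh \<le> exp e * Q x2 xh)" for e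
    by simp
  hence "{e. \<forall>x1\<in>{1..M}. \<forall>x2\<in>{1..M}. \<forall>xh\<in>{1..M}. Q (p x1) (p xh) \<le> exp e * Q (p x2) (p xh)}
     = {e. \<forall>x1\<in>{1..M}. \<forall>x2\<in>{1..M}. \<forall>xh\<in>{1..M}. Q x1 xh \<le> exp e * Q x2 xh}"
    using eq[unfolded im] by (intro Collect_cong) 
  then show ?thesis unfolding eps_DP_def relabel_def by simp
qed

lemma relabel_dist: "distortion (relabel Q p) i = distortion Q (p i)"
  by (simp add: distortion_def relabel_def)

lemma cont_ij [continuous_intros]: "continuous_on S (\<lambda>Q::nat\<Rightarrow>nat\<Rightarrow>real. Q i j)"
  by (rule continuous_on_subset[of UNIV]) (auto intro: continuous_on_product_then_coordinatewise)

lemma compact_K: "compact {Q::nat\<Rightarrow>nat\<Rightarrow>real. \<forall>i j. Q i j \<in> (if i\<in>A \<and> j\<in>A then {0..1} else {0})}"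
proof -
  define S where "S = (\<lambda>i j. (if i\<in>A \<and> j\<in>A then {0..1::real} else {0}))"
  have c1: "compact (PiE UNIV (S i))" for i
    using compactin_PiE[of "\<lambda>_. euclidean" UNIV "S i"]
    by (simp add: euclidean_product_topology S_def)
  have "compact (PiE UNIV (\<lambda>i. PiE UNIV (S i)))"
    using compactin_PiE[of "\<lambda>_. euclidean" UNIV "\<lambda>i. PiE UNIV (S i)"] c1
    by (simp add: euclidean_product_topology)
  moreover have "PiE UNIV (\<lambda>i. PiE UNIV (S i)) = {Q. \<forall>i j. Q i j \<in> S i j}"
    by (auto simp: PiE_iff)
  ultimately show ?thesis by (simp add: S_def)
qed

lemma closed_C: "closed (Cset M e)"
  unfolding Cset_def Ball_def
  by (intro closed_Collect_all closed_Collect_imp closed_Collect_le continuous_intros) auto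

lemma closed_V: "closed (valid_mechs M PP D)"
proof -
  have "valid_mechs M PP D = {Q. (\<forall>i\<in>{1..M}. \<forall>j\<in>{1..M}. 0 \<le> Q i j) \<and> (\<forall>i\<in>{1..M}. (\<Sum>j=1..M. Q i j) = 1)
     \<and> (\<forall>P\<in>PP. (\<Sum>i=1..M. P i * (1 - Q i i)) \<le> D)}"
    unfolding valid_mechs_def is_mechanism_def distortion_def by auto
  moreover have "closed \<dots>"
    unfolding Ball_def
    by (intro closed_Collect_conj closed_Collect_all closed_Collect_imp closed_Collect_le
        closed_Collect_eq continuous_intros) auto
  ultimately show ?thesis by simp
qed

lemma exists_opt:
  assumes D: "0 \<le> D"
  shows "\<exists>Q0\<in>valid_mechs M PP D. \<forall>Q'\<in>valid_mechs M PP D. eps_DP M Q0 \<le> eps_DP M Q'"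
proof -
  define A where "A = {1..M::nat}"
  define V where "V = valid_mechs M PP D"
  define K where "K = {Q::nat\<Rightarrow>nat\<Rightarrow>real. \<forall>i j. Q i j \<in> (if i\<in>A \<and> j\<in>A then {0..1} else {0})}"
  define tr where "tr = (\<lambda>(Q::nat\<Rightarrow>nat\<Rightarrow>real) i j. if i\<in>A \<and> j\<in>A then Q i j else 0)"
  define m where "m = Inf (eps_DP M ` V)"
  have trV: "tr Q \<in> V \<inter> K" if "Q \<in> V" for Q
  proof -
    have mech: "is_mechanism M Q" and val: "\<forall>P\<in>PP. (\<Sum>i=1..M. P i * distortion Q i) \<le> D"
      using that by (auto simp: V_def valid_mechs_def)
    have rs: "(\<Sum>j=1..M. tr Q i j) = (\<Sum>j=1..M. Q i j)" if "i \<in> A" for i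
      using that by (intro sum.cong) (auto simp: tr_def A_def)
    have ds: "(\<Sum>i=1..M. P i * distortion (tr Q) i) = (\<Sum>i=1..M. P i * distortion Q i)" for P
      by (intro sum.cong) (auto simp: tr_def A_def distortion_def)
    have le1: "Q i j \<le> 1" if "i \<in> A" "j \<in> A" for i j
    proof -
      have "Q i j \<le> (\<Sum>j=1..M. Q i j)"
        using mech that by (intro member_le_sum) (auto simp: is_mechanism_def A_def)
      then show ?thesis using mech that by (auto simp: is_mechanism_def A_def)
    qed
    have "is_mechanism M (tr Q)" using mech rs unfolding is_mechanism_def
      by (auto simp: tr_def A_def)
    moreover have "tr Q \<in> K" using mech le1 unfolding K_def tr_def is_mechanism_def A_def by auto
    ultimately show ?thesis using val ds by (auto simp: V_def valid_mechs_def)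
  qed
  have trE: "eps_DP M (tr Q) = eps_DP M Q" for Q
  proof -
    have "{e. \<forall>x1\<in>{1..M}. \<forall>x2\<in>{1..M}. \<forall>xh\<in>{1..M}. tr Q x1 xh \<le> exp e * tr Q x2 xh}
        = {e. \<forall>x1\<in>{1..M}. \<forall>x2\<in>{1..M}. \<forall>xh\<in>{1..M}. Q x1 xh \<le> exp e * Q x2 xh}"
      by (auto simp: tr_def A_def)
    then show ?thesis unfolding eps_DP_def by simp
  qed
  define Qid where "Qid = (\<lambda>i j::nat. if i = j then 1 else (0::real))"
  have QidV: "Qid \<in> V"
    unfolding V_def valid_mechs_def is_mechanism_def Qid_def distortion_def using D by auto
  have nonneg: "\<forall>i\<in>{1..M}. \<forall>j\<in>{1..M}. 0 \<le> Q i j" if "Q \<in> V" for Q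
    using that by (auto simp: V_def valid_mechs_def is_mechanism_def)
  obtain Q0 where Q0: "Q0 \<in> V" "eps_DP M Q0 \<le> m"
  proof (cases "m = \<infinity>")
    case True then show ?thesis using that QidV by auto
  next
    case False
    define F where "F = Cset M ` {c. m < ereal c}"
    have "(V \<inter> K) \<inter> \<Inter>F \<noteq> {}"
    proof (rule compact_imp_fip)
      have "compact (K \<inter> V)" unfolding V_def K_def
        by (intro compact_Int_closed closed_V compact_K)
      then show "compact (V \<inter> K)" by (simp add: Int_commute)
    next
      show "closed T" if "T \<in> F" for T using that closed_C by (auto simp: F_def)
    next
      fix F' assume F': "finite F'" "F' \<subseteq> F"
      then obtain C where C: "C \<subseteq> {c. m < ereal c}" "finite C" "F' = Cset M ` C"
        unfolding F_def by (meson finite_subset_image)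
      show "V \<inter> K \<inter> \<Inter>F' \<noteq> {}"
      proof (cases "C = {}")
        case True then show ?thesis using C trV[OF QidV] by auto
      next
        case False
        define c0 where "c0 = Min C"
        have "c0 \<in> C" using C False by (simp add: c0_def)
        hence "m < ereal c0" using C by auto
        then obtain e where "e \<in> eps_DP M ` V" "e < ereal c0"
          unfolding m_def by (meson Inf_less_iff)
        then obtain Q where Q: "Q \<in> V" "eps_DP M Q < ereal c0" by auto
        have "tr Q \<in> Cset M c" if "c \<in> C" for c
        proof -
          have "c0 \<le> c" using that C by (simp add: c0_def)
          hence "eps_DP M (tr Q) \<le> ereal c" using Q trE by (metis ereal_less_eq(3) less_imp_le order_trans)
          then show ?thesis using eps_le_iff nonneg trV[OF Q(1)] by blast
        qed
        then show ?thesis using trV[OF Q(1)] C by auto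
      qed
    qed
    then obtain Q0 where Q0: "Q0 \<in> V" "\<forall>T\<in>F. Q0 \<in> T" by blast
    have "eps_DP M Q0 \<le> m"
    proof (rule dense_ge)
      fix y assume y: "m < y"
      show "eps_DP M Q0 \<le> y"
      proof (cases y)
        case (real r)
        then have "Q0 \<in> Cset M r" using Q0 y by (auto simp: F_def)
        then show ?thesis using eps_le_iff nonneg Q0 real by blast
      qed (use y in auto)
    qed
    then show ?thesis using that Q0 by blast
  qed
  have "eps_DP M Q0 \<le> eps_DP M Q'" if "Q' \<in> V" for Q'
    using Q0(2) that unfolding m_def by (meson INF_lower order_trans)
  then show ?thesis using Q0 unfolding V_def by blast
qed

theorem lemma2:
  fixes M :: nat and \<P> :: "(nat \<Rightarrow> real) set" and T :: "nat \<Rightarrow> nat" and D :: real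
  assumes dists: "\<forall>P\<in>\<P>. is_dist M P"
    and classII: "class_II M \<P>"
    and T: "T permutes {1..M}" "\<forall>P\<in>\<P>. ordered_by M T P"
    and D: "0 < D" "D \<le> 1"
  shows "\<exists>Q\<in>valid_mechs M \<P> D.
           (\<forall>Q'\<in>valid_mechs M \<P> D. eps_DP M Q \<le> eps_DP M Q') \<and>
           (\<forall>k\<in>{1..M}. \<forall>l\<in>{1..M}. k \<le> l \<longrightarrow> distortion Q (T k) \<le> distortion Q (T l))"
proof -
  define A where "A = {1..M}"
  define V where "V = valid_mechs M \<P> D"
  obtain Q0 where Q0: "Q0 \<in> V" "\<forall>Q'\<in>V. eps_DP M Q0 \<le> eps_DP M Q'"
    using exists_opt[of D M \<P>] D unfolding V_def by auto
  define D0 where "D0 = distortion Q0"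
  define PS where "PS = {p. p permutes A \<and> relabel Q0 p \<in> V}"
  define \<Phi> where "\<Phi> = (\<lambda>p. \<Sum>k\<in>A. real k * D0 (p (T k)))"
  have fin: "finite PS" unfolding PS_def A_def
    by (rule finite_subset[OF _ finite_permutations[of "{1..M}"]]) auto
  have "id \<in> PS" using Q0 by (simp add: PS_def relabel_def permutes_id)
  hence ne: "PS \<noteq> {}" by auto
  define p where "p = (SOME p. p \<in> PS \<and> \<Phi> p = Max (\<Phi> ` PS))"
  have "\<exists>p. p \<in> PS \<and> \<Phi> p = Max (\<Phi> ` PS)" proof -
    have "Max (\<Phi> ` PS) \<in> \<Phi> ` PS" using fin ne by (intro Max_in) auto
    then show ?thesis by (metis imageE)
  qed
  hence p: "p \<in> PS" "\<Phi> p = Max (\<Phi> ` PS)" unfolding p_def by (metis (mono_tags, lifting) someI_ex)+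
  have pmax: "\<Phi> q \<le> \<Phi> p" if "q \<in> PS" for q using p fin that by simp
  have pperm: "p permutes A" and pV: "relabel Q0 p \<in> V" using p by (auto simp: PS_def)
  define Q where "Q = relabel Q0 p"
  have Qopt: "\<forall>Q'\<in>V. eps_DP M Q \<le> eps_DP M Q'"
    using Q0 relabel_eps[of p M Q0] pperm unfolding Q_def A_def by simp
  have sorted: "distortion Q (T k) \<le> distortion Q (T l)" if kl: "k \<in> A" "l \<in> A" "k \<le> l" for k l
  proof (rule ccontr)
    assume "\<not> ?thesis"
    hence gt: "D0 (p (T k)) > D0 (p (T l))" by (simp add: Q_def relabel_dist D0_def)
    hence "k \<noteq> l" by auto
    hence klt: "k < l" using kl by simp
    define a where "a = T k"
    define b where "b = T l"
    have ab: "a \<in> A" "b \<in> A" "a \<noteq> b"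
      using kl \<open>k\<noteq>l\<close> T(1) permutes_in_image[OF T(1)] permutes_inj[OF T(1)]
      unfolding a_def b_def A_def by (auto dest: injD)
    define q where "q = p \<circ> Transposition.transpose a b"
    have qperm: "q permutes A" unfolding q_def
      by (rule permutes_compose[OF permutes_swap_id[OF ab(1,2)] pperm])
    have qa: "q a = p b" and qb: "q b = p a" and qo: "\<And>i. i \<noteq> a \<Longrightarrow> i \<noteq> b \<Longrightarrow> q i = p i"
      by (auto simp: q_def)
    have Q0mech: "is_mechanism M Q0" using Q0 by (simp add: V_def valid_mechs_def)
    have "relabel Q0 q \<in> V"
    proof -
      have mech: "is_mechanism M (relabel Q0 q)" using relabel_mech qperm Q0mech A_def by blast
      have pval: "\<forall>P\<in>\<P>. (\<Sum>i\<in>A. P i * D0 (p i)) \<le> D"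
        using pV by (simp add: V_def valid_mechs_def relabel_dist D0_def A_def)
      have "(\<Sum>i\<in>A. P i * D0 (q i)) \<le> D" if P: "P \<in> \<P>" for P
      proof -
        have "(\<Sum>i\<in>A. P i * D0 (q i)) = (\<Sum>i\<in>A. P i * D0 (p i)) + (P a * D0 (q a) - P a * D0 (p a))
              + (P b * D0 (q b) - P b * D0 (p b))"
          using ab qo by (intro sum_swap2) (auto simp: A_def)
        also have "\<dots> = (\<Sum>i\<in>A. P i * D0 (p i)) + (P a - P b) * (D0 (p b) - D0 (p a))"
          by (simp add: qa qb algebra_simps)
        also have "\<dots> \<le> (\<Sum>i\<in>A. P i * D0 (p i))"
        proof -
          have "P b \<le> P a" using T(2) P kl unfolding ordered_by_def a_def b_def A_def by blast
          moreover have "D0 (p b) \<le> D0 (p a)" using gt by (simp add: a_def b_def)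
          ultimately show ?thesis by (simp add: mult_nonneg_nonpos)
        qed
        finally show ?thesis using pval P by (meson order_trans)
      qed
      then show ?thesis using mech by (simp add: V_def valid_mechs_def relabel_dist D0_def A_def)
    qed
    hence "q \<in> PS" using qperm by (simp add: PS_def)
    hence le: "\<Phi> q \<le> \<Phi> p" by (rule pmax)
    have Tinj: "T i \<noteq> a" "T i \<noteq> b" if "i \<noteq> k" "i \<noteq> l" for i
      using that permutes_inj[OF T(1)] unfolding a_def b_def by (auto dest: injD)
    have "\<Phi> q = \<Phi> p + (real k * D0 (q a) - real k * D0 (p a)) + (real l * D0 (q b) - real l * D0 (p b))"
      unfolding \<Phi>_def a_def b_def
      using sum_swap2[of A k l "\<lambda>k. real k * D0 (q (T k))" "\<lambda>k. real k * D0 (p (T k))"]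
        kl \<open>k\<noteq>l\<close> Tinj qo by (auto simp: A_def a_def b_def)
    also have "\<dots> = \<Phi> p + (real l - real k) * (D0 (p a) - D0 (p b))"
      by (simp add: qa qb algebra_simps)
    finally have "\<Phi> q > \<Phi> p" using klt gt by (simp add: a_def b_def)
    with le show False by simp
  qed
  show ?thesis
    using pV Qopt sorted unfolding Q_def V_def A_def by blast
qed

end
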